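(* Let $\Omega\subset\mathbb{R}^n$ be open with $0\in\Omega$, let $\alpha\in\mathbb{R}$ and $1\le p,q\le\infty$. Then $\dot K_p^{\alpha,q}(\Omega)\hookrightarrow L^1_{\mathrm{loc}}(\Omega)$ holds if and only if $(\alpha,p,q)\in V_{\alpha,p,q}$.
   Context: For $k\in\mathbb{Z}$ let $C_k=\{x\in\mathbb{R}^n: 2^{k-1}\le |x|<2^k\}$ and $\chi_k$ its characteristic function. For $\alpha\in\mathbb{R}$ and $1\le p,q\le\infty$, the homogeneous Herz space $\dot K_p^{\alpha,q}(\mathbb{R}^n)$ is the set of $f\in L^p_{\mathrm{loc}}(\mathbb{R}^n\setminus\{0\})$ with $\|f\|_{\dot K_p^{\alpha,q}(\mathbb{R}^n)}=\big(\sum_{k\in\mathbb{Z}}2^{k\alpha q}\|f\chi_k\|_{L^p}^q\big)^{1/q}<\infty$ (usual modification when $q=\infty$). For $\Omega$ open, $\dot K_p^{\alpha,q}(\Omega)$ consists of functions $f$ on $\Omega$ with $\|f\|_{\dot K_p^{\alpha,q}(\Omega)}:=\|f\chi_\Omega\|_{\dot K_p^{\alpha,q}(\mathbb{R}^n)}<\infty$ ($f$ extended by zero). $V_{\alpha,p,q}$ denotes the set of triples $(\alpha,p,q)\in\mathbb{R}\times[1,\infty]^2$ such that either (i) $\alpha<n-\frac np$, $1\le p\le\infty$, $1\le q\le\infty$; or (ii) $\alpha=n-\frac np$, $1\le p\le\infty$, $q=1$; or (iii) $\alpha=0$, $p=\infty$, $q=\infty$. *)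

theory Defs
  imports "HOL-Analysis.Analysis" "HOL-Probability.Essential_Supremum"
begin

definition enn_powr :: "ennreal \<Rightarrow> real \<Rightarrow> ennreal" where
  "enn_powr x r = (if x = top then top else ennreal (enn2real x powr r))"

definition Lp_norm :: "ennreal \<Rightarrow> ('a::euclidean_space \<Rightarrow> real) \<Rightarrow> ennreal" where
  "Lp_norm p f = (if p = top then esssup lebesgue (\<lambda>x. ennreal \<bar>f x\<bar>)
     else enn_powr (\<integral>\<^sup>+ x. ennreal (\<bar>f x\<bar> powr enn2real p) \<partial>lebesgue) (1 / enn2real p))"

definition annulus :: "int \<Rightarrow> 'a::euclidean_space set" where
  "annulus k = {x. 2 powr (real_of_int k - 1) \<le> norm x \<and> norm x < 2 powr (real_of_int k)}"

definition Lp_loc_punct :: "ennreal \<Rightarrow> ('a::euclidean_space \<Rightarrow> real) \<Rightarrow> bool" where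
  "Lp_loc_punct p f \<longleftrightarrow> f \<in> borel_measurable lebesgue \<and>
     (\<forall>K. compact K \<and> K \<subseteq> - {0} \<longrightarrow> Lp_norm p (\<lambda>x. f x * indicator K x) < top)"

definition herz_norm :: "real \<Rightarrow> ennreal \<Rightarrow> ennreal \<Rightarrow> ('a::euclidean_space \<Rightarrow> real) \<Rightarrow> ennreal" where
  "herz_norm \<alpha> p q f = (if q = top then
       (SUP k::int. ennreal (2 powr (real_of_int k * \<alpha>)) * Lp_norm p (\<lambda>x. f x * indicator (annulus k) x))
     else enn_powr (\<integral>\<^sup>+ k. ennreal (2 powr (real_of_int k * \<alpha> * enn2real q)) *
              enn_powr (Lp_norm p (\<lambda>x. f x * indicator (annulus k) x)) (enn2real q)
            \<partial>(count_space (UNIV::int set))) (1 / enn2real q))"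

definition herz_space :: "'a::euclidean_space set \<Rightarrow> real \<Rightarrow> ennreal \<Rightarrow> ennreal \<Rightarrow> ('a \<Rightarrow> real) set" where
  "herz_space \<Omega> \<alpha> p q = {f. Lp_loc_punct p (\<lambda>x. indicator \<Omega> x * f x) \<and>
                               herz_norm \<alpha> p q (\<lambda>x. indicator \<Omega> x * f x) < top}"

definition L1_loc :: "'a::euclidean_space set \<Rightarrow> ('a \<Rightarrow> real) set" where
  "L1_loc \<Omega> = {f. \<forall>K. compact K \<and> K \<subseteq> \<Omega> \<longrightarrow> set_integrable lebesgue K f}"

text \<open>The set V of admissible triples, n the dimension; n/p read as 0 for p = infinity.\<close>
definition inv_exp :: "ennreal \<Rightarrow> real" where
  "inv_exp p = (if p = top then 0 else 1 / enn2real p)"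

definition V_set :: "nat \<Rightarrow> (real \<times> ennreal \<times> ennreal) set" where
  "V_set n = {(\<alpha>, p, q). 1 \<le> p \<and> 1 \<le> q \<and>
     (\<alpha> < real n - real n * inv_exp p
      \<or> (\<alpha> = real n - real n * inv_exp p \<and> q = 1)
      \<or> (\<alpha> = 0 \<and> p = top \<and> q = top))}"

end

theory Submission
  imports Defs
begin

definition kx :: "'a::euclidean_space \<Rightarrow> int" where
  "kx x = \<lfloor>log 2 (norm x)\<rfloor> + 1"

lemma annulus_iff: "x \<in> annulus k \<longleftrightarrow> x \<noteq> 0 \<and> kx x = k"
proof (cases "x = 0")
  case True
  then show ?thesis by (simp add: annulus_def)
next
  case False
  then have n: "norm x > 0" by simp
  have "x \<in> annulus k \<longleftrightarrow> real_of_int k - 1 \<le> log 2 (norm x) \<and> log 2 (norm x) < real_of_int k"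
    unfolding annulus_def using n by (simp add: le_log_iff log_less_iff)
  also have "\<dots> \<longleftrightarrow> kx x = k" unfolding kx_def by linarith
  finally show ?thesis using False by simp
qed

lemma annulus_eq: "annulus k = ball 0 (2 powr real_of_int k) - ball 0 (2 powr (real_of_int k - 1))"
  by (auto simp: annulus_def)

lemma annulus_sets [measurable]: "annulus k \<in> sets lebesgue" "annulus k \<in> sets borel"
  by (auto simp: annulus_eq)

lemma annulus_disj: "x \<in> annulus k \<Longrightarrow> x \<in> annulus j \<Longrightarrow> k = j"
  by (simp add: annulus_iff)

lemma norm_annulus: "x \<in> annulus k \<Longrightarrow> 2 powr (real_of_int k - 1) \<le> norm x \<and> norm x < 2 powr real_of_int k"
  by (simp add: annulus_def)

definition m0 :: "'a::euclidean_space itself \<Rightarrow> real" where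
  "m0 _ = unit_ball_vol (DIM('a)) * (1 - 2 powr (- real DIM('a)))"

lemma m0_pos: "m0 TYPE('a::euclidean_space) > 0"
proof -
  have "2 powr (- real DIM('a)) < 1" by (simp add: powr_less_one)
  then show ?thesis unfolding m0_def by simp
qed

lemma emeasure_annulus:
  "emeasure lebesgue (annulus k :: 'a::euclidean_space set) = ennreal (2 powr (real_of_int k * DIM('a)) * m0 TYPE('a))"
proof -
  let ?n = "DIM('a)"
  have sub: "ball (0::'a) (2 powr (real_of_int k - 1)) \<subseteq> ball 0 (2 powr real_of_int k)"
    by (intro subset_ball) simp
  have b: "emeasure lborel (ball (0::'a) r) = ennreal (unit_ball_vol ?n * r ^ ?n)" if "r \<ge> 0" for r
    using emeasure_ball[OF that, of "0::'a"] by simp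
  have b': "emeasure lebesgue (ball (0::'a) r) = emeasure lborel (ball (0::'a) r)" for r
    by simp
  have bl: "emeasure lborel (ball (0::'a) r) \<noteq> top" for r
    using emeasure_lborel_ball_finite[of "0::'a" r] by simp
  have "emeasure lebesgue (annulus k :: 'a set) =
        emeasure lebesgue (ball (0::'a) (2 powr real_of_int k)) - emeasure lebesgue (ball (0::'a) (2 powr (real_of_int k - 1)))"
    unfolding annulus_eq
    by (rule emeasure_Diff) (use sub bl in auto)
  also have "\<dots> = ennreal (unit_ball_vol ?n * (2 powr real_of_int k) ^ ?n) - ennreal (unit_ball_vol ?n * (2 powr (real_of_int k - 1)) ^ ?n)"
    by (simp add: b)
  also have "\<dots> = ennreal (unit_ball_vol ?n * (2 powr real_of_int k) ^ ?n - unit_ball_vol ?n * (2 powr (real_of_int k - 1)) ^ ?n)"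
    by (rule ennreal_minus) simp
  also have "(2 powr real_of_int k) ^ ?n = 2 powr (real_of_int k * ?n)"
    by (simp add: powr_realpow[symmetric] powr_powr)
  also have "(2 powr (real_of_int k - 1)) ^ ?n = 2 powr (real_of_int k * ?n) * 2 powr (- real ?n)"
    by (simp add: powr_realpow[symmetric] powr_powr powr_add[symmetric] algebra_simps)
  finally show ?thesis by (simp add: m0_def algebra_simps)
qed

lemma enn_powr_ennreal: "x \<ge> 0 \<Longrightarrow> enn_powr (ennreal x) r = ennreal (x powr r)"
  by (simp add: enn_powr_def)

lemma enn_powr_top [simp]: "enn_powr top r = top"
  by (simp add: enn_powr_def)

lemma enn_powr_less_top: "enn_powr x r < top \<longleftrightarrow> x < top"
  by (auto simp: enn_powr_def top.not_eq_extremum)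

lemma enn_powr_one: "enn_powr x 1 = x"
  by (cases x) (auto simp: enn_powr_def)

lemma enn_powr_mono: assumes "x \<le> y" "r \<ge> 0" shows "enn_powr x r \<le> enn_powr y r"
proof (cases "y = top")
  case False
  then have "x \<noteq> top" using assms top.extremum_uniqueI by auto
  then show ?thesis using False assms
    by (auto simp: enn_powr_def top.not_eq_extremum intro!: ennreal_leI powr_mono2 enn2real_mono)
qed simp

lemma p_fin: assumes "1 \<le> p" "p \<noteq> top"
  shows "1 \<le> enn2real p" "p = ennreal (enn2real p)" "inv_exp p = 1 / enn2real p"
proof -
  show "p = ennreal (enn2real p)" using assms by (cases p) auto
  show "1 \<le> enn2real p" using assms
    by (cases p) auto
  show "inv_exp p = 1 / enn2real p" using assms by (simp add: inv_exp_def)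
qed

lemma AE_not_in_null: assumes "A \<in> sets M" "AE x in M. x \<notin> A" shows "emeasure M A = 0"
proof -
  from assms(2) obtain N where "{x\<in>space M. x \<in> A} \<subseteq> N" "N \<in> null_sets M"
    by (auto simp: eventually_ae_filter)
  moreover have "{x\<in>space M. x \<in> A} = A" using sets.sets_into_space[OF assms(1)] by auto
  ultimately have "A \<in> null_sets M" using null_sets_subset[of _ M A] assms(1) by auto
  then show ?thesis by auto
qed

lemma Lp_norm_const_ind:
  fixes A :: "'a::euclidean_space set"
  assumes A: "A \<in> sets lebesgue" "emeasure lebesgue A = ennreal m" "m > 0" and p: "1 \<le> p"
  shows "Lp_norm p (\<lambda>x. c * indicator A x) = ennreal (\<bar>c\<bar> * m powr inv_exp p)"
proof (cases "p = top")
  case True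
  have meas: "(\<lambda>x. ennreal \<bar>c * indicator A x\<bar>) \<in> borel_measurable lebesgue"
    using A by measurable
  have le: "esssup lebesgue (\<lambda>x. ennreal \<bar>c * indicator A x\<bar>) \<le> ennreal \<bar>c\<bar>"
    by (rule esssup_I[OF meas]) (auto simp: indicator_def)
  have ge: "esssup lebesgue (\<lambda>x. ennreal \<bar>c * indicator A x\<bar>) \<ge> ennreal \<bar>c\<bar>"
  proof (rule ccontr)
    assume "\<not> ?thesis"
    then have lt: "esssup lebesgue (\<lambda>x. ennreal \<bar>c * indicator A x\<bar>) < ennreal \<bar>c\<bar>" by simp
    have "AE x in lebesgue. x \<notin> A"
      using esssup_AE[of "(\<lambda>x. ennreal \<bar>c * indicator A x\<bar>)" lebesgue]
      by eventually_elim (use lt in \<open>auto simp: indicator_def\<close>)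
    then have "emeasure lebesgue A = 0" using A(1) by (rule AE_not_in_null[rotated])
    then show False using A by simp
  qed
  show ?thesis using True le ge A(3) by (simp add: Lp_norm_def inv_exp_def)
next
  case False
  define r where "r = enn2real p"
  have r: "1 \<le> r" "inv_exp p = 1 / r" using p_fin[OF p False] by (auto simp: r_def)
  have "(\<integral>\<^sup>+ x. ennreal (\<bar>c * indicator A x\<bar> powr r) \<partial>lebesgue)
      = (\<integral>\<^sup>+ x. ennreal (\<bar>c\<bar> powr r) * indicator A x \<partial>lebesgue)"
    using r by (intro nn_integral_cong) (auto simp: indicator_def)
  also have "\<dots> = ennreal (\<bar>c\<bar> powr r * m)"
    using A by (simp add: nn_integral_cmult_indicator ennreal_mult)
  finally have I: "(\<integral>\<^sup>+ x. ennreal (\<bar>c * indicator A x\<bar> powr r) \<partial>lebesgue) = ennreal (\<bar>c\<bar> powr r * m)" .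
  have "(\<bar>c\<bar> powr r * m) powr (1 / r) = \<bar>c\<bar> * m powr (1 / r)"
    using r A by (simp add: powr_mult powr_powr)
  moreover have "enn_powr (ennreal (\<bar>c\<bar> powr r * m)) (1 / r) = ennreal ((\<bar>c\<bar> powr r * m) powr (1 / r))"
    using A by (intro enn_powr_ennreal) simp
  ultimately show ?thesis using False I r
    by (simp add: Lp_norm_def r_def[symmetric])
qed

lemma Lp_norm_bounded:
  fixes g :: "'a::euclidean_space \<Rightarrow> real"
  assumes g: "g \<in> borel_measurable lebesgue" and A: "A \<in> sets lebesgue" "emeasure lebesgue A < top"
    and b: "\<And>x. \<bar>g x\<bar> \<le> M * indicator A x" and p: "1 \<le> p" and M: "M \<ge> 0"
  shows "Lp_norm p g < top"
proof (cases "p = top")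
  case True
  have "esssup lebesgue (\<lambda>x. ennreal \<bar>g x\<bar>) \<le> ennreal M"
  proof (rule esssup_I)
    show "(\<lambda>x. ennreal \<bar>g x\<bar>) \<in> borel_measurable lebesgue" using g by measurable
    show "AE x in lebesgue. ennreal \<bar>g x\<bar> \<le> ennreal M"
    proof (intro AE_I2 ennreal_leI)
      fix x show "\<bar>g x\<bar> \<le> M" using b[of x] M by (cases "x \<in> A") auto
    qed
  qed
  then show ?thesis using True by (simp add: Lp_norm_def le_less_trans)
next
  case False
  define r where "r = enn2real p"
  have r: "1 \<le> r" using p_fin[OF p False] by (auto simp: r_def)
  have "(\<integral>\<^sup>+ x. ennreal (\<bar>g x\<bar> powr r) \<partial>lebesgue) \<le> (\<integral>\<^sup>+ x. ennreal (M powr r) * indicator A x \<partial>lebesgue)"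
  proof (intro nn_integral_mono)
    fix x show "ennreal (\<bar>g x\<bar> powr r) \<le> ennreal (M powr r) * indicator A x"
    proof (cases "x \<in> A")
      case True then show ?thesis using b[of x] r by (auto intro!: ennreal_leI powr_mono2)
    next
      case False then show ?thesis using b[of x] by simp
    qed
  qed
  also have "\<dots> = ennreal (M powr r) * emeasure lebesgue A"
    using A by (simp add: nn_integral_cmult_indicator)
  also have "\<dots> < top" using A by (simp add: ennreal_mult_less_top)
  finally show ?thesis using False by (simp add: Lp_norm_def r_def[symmetric] enn_powr_less_top)
qed

lemma young_pt:
  fixes r s i m K t e :: real
  assumes r: "r > 1" and s: "s = r / (r - 1)" and i: "i > 0" and m: "m > 0" and t: "t \<ge> 0"
    and e: "e = 0 \<or> e = 1" and te: "e = 0 \<Longrightarrow> t = 0"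
    and K: "K = i powr (-1/r) * m powr (-1/s)"
  shows "t * K \<le> t powr r / (r * i) + e / (s * m)"
proof -
  have s1: "s > 1" using r unfolding s by (simp add: less_divide_eq)
  have rs: "1/r + 1/s = 1" using r unfolding s by (simp add: field_simps)
  define a where "a = t * i powr (-1/r)"
  define b where "b = m powr (-1/s) * e"
  have a0: "a \<ge> 0" and b0: "b \<ge> 0" using t e by (auto simp: a_def b_def)
  have Y: "a * b \<le> a powr r / r + b powr s / s"
    by (rule Youngs_inequality[OF r s1 rs a0 b0])
  have ab: "a * b = t * K"
    using e te by (auto simp: a_def b_def K)
  have a': "a = t / i powr (1/r)" by (simp add: a_def powr_minus_divide)
  have ar: "a powr r = t powr r / i"
    using i t r unfolding a' by (simp add: powr_divide powr_powr)
  have bs: "b powr s = e / m"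
  proof (cases "e = 0")
    case True then show ?thesis by (simp add: b_def)
  next
    case False
    then have "b = m powr (-1/s)" using e by (simp add: b_def)
    then have "b powr s = m powr (-1)" using s1 by (simp add: powr_powr)
    then show ?thesis using False e m by (simp add: powr_minus_divide)
  qed
  show ?thesis using Y ab ar bs by (simp add: field_simps)
qed

lemma holder_set:
  fixes g :: "'a::euclidean_space \<Rightarrow> real"
  assumes g: "g \<in> borel_measurable lebesgue" and A: "A \<in> sets lebesgue" "emeasure lebesgue A = ennreal m" "m > 0"
    and p: "1 \<le> p"
  shows "(\<integral>\<^sup>+x. ennreal \<bar>g x * indicator A x\<bar> \<partial>lebesgue)
          \<le> Lp_norm p (\<lambda>x. g x * indicator A x) * ennreal (m powr (1 - inv_exp p))"
proof -
  note [measurable] = g A(1)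
  define h where "h x = g x * indicator A x" for x
  have [measurable]: "h \<in> borel_measurable lebesgue" unfolding h_def by measurable
  have h0: "x \<notin> A \<Longrightarrow> h x = 0" for x by (simp add: h_def)
  have "(\<integral>\<^sup>+x. ennreal \<bar>h x\<bar> \<partial>lebesgue) \<le> Lp_norm p h * ennreal (m powr (1 - inv_exp p))"
  proof (cases "p = top")
    case True
    define E where "E = esssup lebesgue (\<lambda>x. ennreal \<bar>h x\<bar>)"
    have "(\<integral>\<^sup>+x. ennreal \<bar>h x\<bar> \<partial>lebesgue) \<le> (\<integral>\<^sup>+x. E * indicator A x \<partial>lebesgue)"
    proof (rule nn_integral_mono_AE)
      show "AE x in lebesgue. ennreal \<bar>h x\<bar> \<le> E * indicator A x"
        using esssup_AE[of "\<lambda>x. ennreal \<bar>h x\<bar>" lebesgue]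
        by eventually_elim (auto simp: E_def h0 indicator_def)
    qed
    also have "\<dots> = E * ennreal m" using A by (simp add: nn_integral_cmult_indicator)
    finally show ?thesis using True A(3) by (simp add: Lp_norm_def inv_exp_def E_def)
  next
    case False
    define r where "r = enn2real p"
    have r: "1 \<le> r" "inv_exp p = 1 / r" using p_fin[OF p False] by (auto simp: r_def)
    define I where "I = (\<integral>\<^sup>+ x. ennreal (\<bar>h x\<bar> powr r) \<partial>lebesgue)"
    have LpI: "Lp_norm p h = enn_powr I (1 / r)"
      using False by (simp add: Lp_norm_def I_def r_def)
    show ?thesis
    proof (cases "r = 1")
      case True
      have "(\<integral>\<^sup>+x. ennreal \<bar>h x\<bar> \<partial>lebesgue) = I"
        unfolding I_def True by (intro nn_integral_cong) simp
      then show ?thesis using True A LpI r by (simp add: enn_powr_one)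
    next
      case False
      then have r1: "r > 1" using r by simp
      show ?thesis
      proof (cases "I = top")
        case True
        then show ?thesis using LpI A by (simp add: ennreal_top_mult)
      next
        case Ifin: False
        show ?thesis
        proof (cases "I = 0")
          case True
          have "AE x in lebesgue. ennreal (\<bar>h x\<bar> powr r) = 0"
            using True unfolding I_def by (subst (asm) nn_integral_0_iff_AE) auto
          then have "AE x in lebesgue. ennreal \<bar>h x\<bar> = 0"
            by eventually_elim simp
          then have "(\<integral>\<^sup>+x. ennreal \<bar>h x\<bar> \<partial>lebesgue) = 0"
            by (subst nn_integral_0_iff_AE) auto
          then show ?thesis by simp
        next
          case False
          obtain i where i: "I = ennreal i" "i > 0"
            using Ifin False by (cases I) (auto simp: ennreal_0[symmetric] simp del: ennreal_0)
          define s where "s = r / (r - 1)"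
          define K where "K = i powr (-1/r) * m powr (-1/s)"
          have K0: "K > 0" using i A by (simp add: K_def)
          have s1: "1 / s = 1 - 1 / r" using r1 by (simp add: s_def field_simps)
          have s0: "s > 0" using r1 by (simp add: s_def)
          have pt: "\<bar>h x\<bar> * K \<le> \<bar>h x\<bar> powr r / (r * i) + indicator A x / (s * m)" for x
            by (rule young_pt[OF r1 s_def i(2) A(3)]) (auto simp: K_def h0 indicator_def)
          have "ennreal K * (\<integral>\<^sup>+x. ennreal \<bar>h x\<bar> \<partial>lebesgue) = (\<integral>\<^sup>+x. ennreal (\<bar>h x\<bar> * K) \<partial>lebesgue)"
            using K0 by (subst nn_integral_cmult[symmetric]) (auto simp: ennreal_mult' mult.commute)
          also have "\<dots> \<le> (\<integral>\<^sup>+x. ennreal (\<bar>h x\<bar> powr r / (r * i)) + ennreal (1 / (s * m)) * indicator A x \<partial>lebesgue)"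
          proof (intro nn_integral_mono)
            fix x
            have sm: "s * m > 0" using r1 A by (simp add: s_def)
            have "ennreal (\<bar>h x\<bar> * K) \<le> ennreal (\<bar>h x\<bar> powr r / (r * i) + indicator A x / (s * m))"
              by (rule ennreal_leI[OF pt])
            also have "\<dots> = ennreal (\<bar>h x\<bar> powr r / (r * i)) + ennreal (1 / (s * m)) * indicator A x"
              using sm r1 i by (cases "x \<in> A") (auto simp: ennreal_plus)
            finally show "ennreal (\<bar>h x\<bar> * K) \<le> ennreal (\<bar>h x\<bar> powr r / (r * i)) + ennreal (1 / (s * m)) * indicator A x" .
          qed
          also have "\<dots> = (\<integral>\<^sup>+x. ennreal (1 / (r * i)) * ennreal (\<bar>h x\<bar> powr r) \<partial>lebesgue) + ennreal (1 / (s * m)) * emeasure lebesgue A"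
            using A i r1 by (subst nn_integral_add) (auto simp: nn_integral_cmult_indicator ennreal_mult'[symmetric] intro!: nn_integral_cong)
          also have "\<dots> = ennreal (1 / (r * i)) * I + ennreal (1 / (s * m)) * ennreal m"
            unfolding I_def A(2) by (subst nn_integral_cmult) auto
          also have "\<dots> = ennreal (1 / r + 1 / s)"
          proof -
            have "ennreal (1 / (s * m)) * ennreal m = ennreal (1 / s)"
              using A s0 by (simp add: ennreal_mult'[symmetric])
            moreover have "ennreal (1 / (r * i)) * ennreal i = ennreal (1 / r)"
              using i r1 by (simp add: ennreal_mult'[symmetric])
            ultimately show ?thesis using i s0 r1 i by (simp add: ennreal_plus)
          qed
          also have "\<dots> = 1" using s1 by simp
          finally have le1: "ennreal K * (\<integral>\<^sup>+x. ennreal \<bar>h x\<bar> \<partial>lebesgue) \<le> 1" .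
          have "(\<integral>\<^sup>+x. ennreal \<bar>h x\<bar> \<partial>lebesgue) = ennreal (1 / K) * (ennreal K * (\<integral>\<^sup>+x. ennreal \<bar>h x\<bar> \<partial>lebesgue))"
            using K0 by (simp add: mult.assoc[symmetric] ennreal_mult'[symmetric])
          also have "\<dots> \<le> ennreal (1 / K) * 1" by (rule mult_left_mono[OF le1]) simp
          also have "1 / K = i powr (1 / r) * m powr (1 - 1 / r)"
            using i A unfolding K_def s1[symmetric] by (simp add: powr_minus_divide field_simps)
          also have "ennreal (i powr (1 / r) * m powr (1 - 1 / r)) * 1 = Lp_norm p h * ennreal (m powr (1 - inv_exp p))"
            using LpI i r by (simp add: enn_powr_ennreal ennreal_mult')
          finally show ?thesis .
        qed
      qed
    qed
  qed
  then show ?thesis by (simp add: h_def[abs_def])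
qed

lemma int_sum_eq:
  fixes h :: "int \<Rightarrow> ennreal"
  assumes "\<And>k. k > k0 \<Longrightarrow> h k = 0"
  shows "(\<integral>\<^sup>+k. h k \<partial>count_space UNIV) = (\<Sum>j. h (k0 - int j))"
proof -
  have bij: "bij_betw (\<lambda>j::nat. k0 - int j) UNIV {..k0}"
    by (rule bij_betwI[where g="\<lambda>k. nat (k0 - k)"]) auto
  have "(\<integral>\<^sup>+k. h k \<partial>count_space UNIV) = (\<integral>\<^sup>+k. h k * indicator {..k0} k \<partial>count_space UNIV)"
    using assms by (intro nn_integral_cong) (auto simp: indicator_def not_le)
  also have "\<dots> = (\<integral>\<^sup>+k. h k \<partial>count_space {..k0})"
    by (simp add: nn_integral_count_space_indicator)
  also have "\<dots> = (\<integral>\<^sup>+j. h (k0 - int j) \<partial>count_space UNIV)"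
    by (rule nn_integral_bij_count_space[OF bij, symmetric])
  also have "\<dots> = (\<Sum>j. h (k0 - int j))" by (rule nn_integral_count_space_nat)
  finally show ?thesis .
qed

lemma int_sum_le:
  fixes h :: "int \<Rightarrow> ennreal"
  shows "(\<Sum>j. h (k0 - int j)) \<le> (\<integral>\<^sup>+k. h k \<partial>count_space UNIV)"
proof -
  have "(\<Sum>j. h (k0 - int j)) = (\<Sum>j. h (k0 - int j) * indicator {..k0} (k0 - int j))"
    by simp
  also have "\<dots> = (\<integral>\<^sup>+k. h k * indicator {..k0} k \<partial>count_space UNIV)"
    by (rule int_sum_eq[symmetric]) simp
  also have "\<dots> \<le> (\<integral>\<^sup>+k. h k \<partial>count_space UNIV)"
    by (intro nn_integral_mono) (simp add: indicator_def)
  finally show ?thesis .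
qed

lemma ann_sum:
  fixes x :: "'a::euclidean_space"
  shows "(\<Sum>j. ennreal (\<bar>g x\<bar> * indicator (annulus (k0 - int j)) x)) =
           (if x \<noteq> 0 \<and> kx x \<le> k0 then ennreal \<bar>g x\<bar> else 0)"
proof (cases "x \<noteq> 0 \<and> kx x \<le> k0")
  case True
  define j0 where "j0 = nat (k0 - kx x)"
  have iff: "x \<in> annulus (k0 - int j) \<longleftrightarrow> j = j0" for j
    using True by (auto simp: annulus_iff j0_def)
  have "(\<Sum>j. ennreal (\<bar>g x\<bar> * indicator (annulus (k0 - int j)) x)) =
        (\<Sum>j\<in>{j0}. ennreal (\<bar>g x\<bar> * indicator (annulus (k0 - int j)) x))"
    by (rule suminf_finite) (auto simp: iff indicator_def)
  then show ?thesis using True iff by simp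
next
  case False
  have "x \<notin> annulus (k0 - int j)" for j using False by (auto simp: annulus_iff)
  then show ?thesis using False by (simp only: if_False indicator_simps mult_zero_right ennreal_0 suminf_zero) simp
qed

lemma herz_term_le:
  fixes F :: "'a::euclidean_space \<Rightarrow> real"
  assumes H: "herz_norm \<alpha> p q F < top" and q: "1 \<le> q"
  shows "ennreal (2 powr (real_of_int k * \<alpha>)) * Lp_norm p (\<lambda>x. F x * indicator (annulus k) x) \<le> herz_norm \<alpha> p q F"
proof (cases "q = top")
  case True
  then show ?thesis by (simp add: herz_norm_def) (rule SUP_upper, simp)
next
  case False
  define r where "r = enn2real q"
  have r: "1 \<le> r" using p_fin[OF q False] by (auto simp: r_def)
  define L where "L = Lp_norm p (\<lambda>x. F x * indicator (annulus k) x)"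
  define S where "S = (\<integral>\<^sup>+ k. ennreal (2 powr (real_of_int k * \<alpha> * r)) *
              enn_powr (Lp_norm p (\<lambda>x. F x * indicator (annulus k) x)) r \<partial>(count_space (UNIV::int set)))"
  have HS: "herz_norm \<alpha> p q F = enn_powr S (1 / r)"
    using False by (simp add: herz_norm_def S_def r_def)
  have Stop: "S < top" using H HS by (simp add: enn_powr_less_top)
  have tS: "ennreal (2 powr (real_of_int k * \<alpha> * r)) * enn_powr L r \<le> S"
    unfolding S_def L_def by (rule nn_integral_ge_point) simp
  have Ltop: "L \<noteq> top"
  proof
    assume "L = top"
    then have "ennreal (2 powr (real_of_int k * \<alpha> * r)) * enn_powr L r = top"
      by (simp add: ennreal_mult_top)
    then show False using tS Stop by (simp add: top_unique)
  qed
  obtain l where l: "L = ennreal l" "l \<ge> 0" using Ltop by (cases L) auto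
  obtain s where s: "S = ennreal s" "s \<ge> 0" using Stop by (cases S) auto
  have "ennreal (2 powr (real_of_int k * \<alpha> * r)) * enn_powr L r = ennreal ((2 powr (real_of_int k * \<alpha>) * l) powr r)"
    using l by (simp add: enn_powr_ennreal ennreal_mult'[symmetric] powr_mult powr_powr)
  then have le: "(2 powr (real_of_int k * \<alpha>) * l) powr r \<le> s" using tS s by simp
  have "2 powr (real_of_int k * \<alpha>) * l = ((2 powr (real_of_int k * \<alpha>) * l) powr r) powr (1 / r)"
    using r l by (simp add: powr_powr)
  also have "\<dots> \<le> s powr (1 / r)" using le r by (intro powr_mono2) auto
  finally have "2 powr (real_of_int k * \<alpha>) * l \<le> s powr (1 / r)" .
  then show ?thesis using HS s l by (simp add: L_def[symmetric] enn_powr_ennreal ennreal_mult'[symmetric] ennreal_leI)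
qed

lemma herz_q1:
  fixes F :: "'a::euclidean_space \<Rightarrow> real"
  shows "herz_norm \<alpha> p 1 F = (\<integral>\<^sup>+k. ennreal (2 powr (real_of_int k * \<alpha>)) * Lp_norm p (\<lambda>x. F x * indicator (annulus k) x) \<partial>count_space UNIV)"
  by (simp add: herz_norm_def enn_powr_one)

lemma ann_bound:
  fixes F :: "'a::euclidean_space \<Rightarrow> real" and \<alpha> :: real
  assumes F: "F \<in> borel_measurable lebesgue" and p: "1 \<le> p"
  defines "\<delta> \<equiv> \<alpha> - (real DIM('a) - real DIM('a) * inv_exp p)"
  shows "(\<integral>\<^sup>+x. ennreal \<bar>F x * indicator (annulus k) x\<bar> \<partial>lebesgue) \<le>
     ennreal (2 powr (- (real_of_int k * \<delta>)) * m0 TYPE('a) powr (1 - inv_exp p)) *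
     (ennreal (2 powr (real_of_int k * \<alpha>)) * Lp_norm p (\<lambda>x. F x * indicator (annulus k) x))"
proof -
  define m where "m = 2 powr (real_of_int k * DIM('a)) * m0 TYPE('a)"
  have m0: "m0 TYPE('a) > 0" by (rule m0_pos)
  have m: "m > 0" using m0 by (simp add: m_def)
  have "(\<integral>\<^sup>+x. ennreal \<bar>F x * indicator (annulus k) x\<bar> \<partial>lebesgue) \<le>
     Lp_norm p (\<lambda>x. F x * indicator (annulus k) x) * ennreal (m powr (1 - inv_exp p))"
    by (rule holder_set[OF F annulus_sets(1) _ m p]) (simp add: emeasure_annulus m_def)
  also have "m powr (1 - inv_exp p) = 2 powr (- (real_of_int k * \<delta>)) * m0 TYPE('a) powr (1 - inv_exp p) * 2 powr (real_of_int k * \<alpha>)"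
  proof -
    have "m powr (1 - inv_exp p) = 2 powr (real_of_int k * DIM('a) * (1 - inv_exp p)) * m0 TYPE('a) powr (1 - inv_exp p)"
      using m0 by (simp add: m_def powr_mult powr_powr)
    also have "2 powr (real_of_int k * DIM('a) * (1 - inv_exp p)) = 2 powr (- (real_of_int k * \<delta>)) * 2 powr (real_of_int k * \<alpha>)"
      by (simp add: powr_add[symmetric] \<delta>_def algebra_simps)
    finally show ?thesis by simp
  qed
  also have "Lp_norm p (\<lambda>x. F x * indicator (annulus k) x) * ennreal (2 powr (- (real_of_int k * \<delta>)) * m0 TYPE('a) powr (1 - inv_exp p) * 2 powr (real_of_int k * \<alpha>))
     = ennreal (2 powr (- (real_of_int k * \<delta>)) * m0 TYPE('a) powr (1 - inv_exp p)) *
     (ennreal (2 powr (real_of_int k * \<alpha>)) * Lp_norm p (\<lambda>x. F x * indicator (annulus k) x))"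
    by (simp add: ennreal_mult mult_ac)
  finally show ?thesis .
qed

lemma suff:
  fixes \<Omega> :: "'a::euclidean_space set" and \<alpha> :: real and p q :: ennreal
  assumes p: "1 \<le> p" and q: "1 \<le> q"
   and V: "\<alpha> - (real DIM('a) - real DIM('a) * inv_exp p) < 0 \<or> (\<alpha> - (real DIM('a) - real DIM('a) * inv_exp p) = 0 \<and> q = 1)"
   and f: "f \<in> herz_space \<Omega> \<alpha> p q" and K: "compact K" "K \<subseteq> \<Omega>"
  shows "set_integrable lebesgue K f"
proof -
  define \<delta> where "\<delta> = \<alpha> - (real DIM('a) - real DIM('a) * inv_exp p)"
  define F where "F x = indicator \<Omega> x * f x" for x
  have F_meas[measurable]: "F \<in> borel_measurable lebesgue" and Hfin: "herz_norm \<alpha> p q F < top"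
    using f by (auto simp: herz_space_def Lp_loc_punct_def F_def[abs_def])
  define A where "A k = ennreal (2 powr (real_of_int k * \<alpha>)) * Lp_norm p (\<lambda>x. F x * indicator (annulus k) x)" for k
  define c0 where "c0 = m0 TYPE('a) powr (1 - inv_exp p)"
  have c0: "c0 \<ge> 0" by (simp add: c0_def)
  define B where "B k = ennreal (2 powr (- (real_of_int k * \<delta>)) * c0) * A k" for k
  have bnd: "(\<integral>\<^sup>+x. ennreal \<bar>F x * indicator (annulus k) x\<bar> \<partial>lebesgue) \<le> B k" for k
    unfolding B_def A_def c0_def \<delta>_def by (rule ann_bound[OF F_meas p])
  obtain R where R: "\<forall>x\<in>K. norm x \<le> R" using compact_imp_bounded[OF K(1)] by (auto simp: bounded_iff)
  obtain N :: nat where N: "R < 2 ^ N" using real_arch_pow[of 2 R] by auto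
  define k1 where "k1 = int N"
  have kx_le: "kx x \<le> k1" if "x \<in> K" "x \<noteq> 0" for x
  proof -
    have "x \<in> annulus (kx x)" using that by (simp add: annulus_iff)
    then have "2 powr (real_of_int (kx x) - 1) \<le> norm x" by (simp add: norm_annulus)
    also have "\<dots> < 2 powr real_of_int k1" using R that N by (auto simp: k1_def powr_realpow)
    finally have "real_of_int (kx x) - 1 < real_of_int k1" by simp
    then show ?thesis by linarith
  qed
  have AE0: "AE x in lebesgue. x \<noteq> (0::'a)"
    by (metis AE_completion AE_lborel_singleton)
  have "(\<integral>\<^sup>+x. ennreal (norm (indicator K x *\<^sub>R f x)) \<partial>lebesgue) = (\<integral>\<^sup>+x. ennreal (\<bar>F x\<bar> * indicator K x) \<partial>lebesgue)"
    using K(2) by (intro nn_integral_cong) (auto simp: F_def indicator_def)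
  also have "\<dots> \<le> (\<integral>\<^sup>+x. (\<Sum>j. ennreal (\<bar>F x\<bar> * indicator (annulus (k1 - int j)) x)) \<partial>lebesgue)"
  proof (rule nn_integral_mono_AE)
    show "AE x in lebesgue. ennreal (\<bar>F x\<bar> * indicator K x) \<le> (\<Sum>j. ennreal (\<bar>F x\<bar> * indicator (annulus (k1 - int j)) x))"
      using AE0
    proof eventually_elim
      case (elim x)
      show ?case
      proof (cases "x \<in> K")
        case True
        then show ?thesis using ann_sum[of F x k1] kx_le[OF True elim] elim by simp
      next
        case False
        then show ?thesis by simp
      qed
    qed
  qed
  also have "\<dots> = (\<Sum>j. \<integral>\<^sup>+x. ennreal (\<bar>F x\<bar> * indicator (annulus (k1 - int j)) x) \<partial>lebesgue)"
    by (rule nn_integral_suminf) measurable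
  also have "\<dots> \<le> (\<Sum>j. B (k1 - int j))"
    using bnd by (intro suminf_le summableI) (auto simp: abs_mult)
  also have "\<dots> < top"
  proof (cases "\<delta> < 0")
    case True
    have Ale: "A k \<le> herz_norm \<alpha> p q F" for k using herz_term_le[OF Hfin q] by (simp add: A_def)
    obtain h where h: "herz_norm \<alpha> p q F = ennreal h" "h \<ge> 0" using Hfin by (cases "herz_norm \<alpha> p q F") auto
    have Bk: "B k \<le> ennreal (2 powr (- (real_of_int k * \<delta>)) * c0 * h)" for k
      unfolding B_def using Ale[of k] h c0 by (simp add: ennreal_mult mult_left_mono)
    then have "(\<Sum>j. B (k1 - int j)) \<le> (\<Sum>j. ennreal (2 powr (- (real_of_int (k1 - int j) * \<delta>)) * c0 * h))"
      by (intro suminf_le summableI Bk)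
    also have "\<dots> < top"
    proof -
      have pj: "(2 powr \<delta>) ^ j = 2 powr (\<delta> * real j)" for j
        by (simp add: powr_realpow[symmetric] powr_powr)
      have eq: "2 powr (- (real_of_int (k1 - int j) * \<delta>)) * c0 * h = (2 powr (- (real_of_int k1 * \<delta>)) * c0 * h) * (2 powr \<delta>) ^ j" for j
        by (simp add: pj powr_add[symmetric] algebra_simps)
      have "summable (\<lambda>j. (2 powr (- (real_of_int k1 * \<delta>)) * c0 * h) * (2 powr \<delta>) ^ j)"
        using True by (intro summable_mult summable_geometric) (simp add: powr_less_one)
      then have "(\<Sum>j. ennreal ((2 powr (- (real_of_int k1 * \<delta>)) * c0 * h) * (2 powr \<delta>) ^ j)) \<noteq> top"
        using c0 h by (intro ennreal_suminf_neq_top) auto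
      then show ?thesis unfolding eq by (simp add: top.not_eq_extremum)
    qed
    finally show ?thesis .
  next
    case False
    then have \<delta>0: "\<delta> = 0" and q1: "q = 1" using V by (auto simp: \<delta>_def)
    have "(\<Sum>j. B (k1 - int j)) = (\<Sum>j. ennreal c0 * A (k1 - int j))" by (simp add: B_def \<delta>0)
    also have "\<dots> = ennreal c0 * (\<Sum>j. A (k1 - int j))" by (simp add: ennreal_suminf_cmult)
    also have "\<dots> \<le> ennreal c0 * (\<integral>\<^sup>+k. A k \<partial>count_space UNIV)" by (intro mult_left_mono int_sum_le) simp
    also have "\<dots> = ennreal c0 * herz_norm \<alpha> p q F" using q1 by (simp add: herz_q1 A_def)
    also have "\<dots> < top" using Hfin by (simp add: ennreal_mult_less_top)
    finally show ?thesis .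
  qed
  finally have fin: "(\<integral>\<^sup>+x. ennreal (norm (indicator K x *\<^sub>R f x)) \<partial>lebesgue) < top" .
  have Ksets[measurable]: "K \<in> sets lebesgue" using K(1) by (simp add: compact_imp_closed)
  have "(\<lambda>x. indicator K x *\<^sub>R f x) = (\<lambda>x. indicator K x * F x)"
    using K(2) by (auto simp: F_def indicator_def fun_eq_iff)
  moreover have "(\<lambda>x. indicator K x * F x) \<in> borel_measurable lebesgue" by measurable
  ultimately show ?thesis unfolding set_integrable_def integrable_iff_bounded using fin by simp
qed

definition Gc :: "int \<Rightarrow> nat \<Rightarrow> int \<Rightarrow> real" where
  "Gc k0 n k = (if k \<le> k0 then 2 powr (- (real_of_int k * real n)) / real_of_int (-k) else 0)"

definition fc :: "int \<Rightarrow> 'a::euclidean_space \<Rightarrow> real" where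
  "fc k0 x = indicator (-{0}) x * Gc k0 DIM('a) (kx x)"

lemma fc_ann: "fc k0 x * indicator (annulus k) x = Gc k0 DIM('a) k * indicator (annulus k) (x::'a::euclidean_space)"
  by (auto simp: fc_def indicator_def annulus_iff)

lemma Gc_nonneg: assumes "k0 \<le> -1" shows "Gc k0 n k \<ge> 0"
proof (cases "k \<le> k0")
  case True
  then have "real_of_int (-k) > 0" using assms by simp
  then show ?thesis unfolding Gc_def if_P[OF True] by (intro divide_nonneg_pos) auto
qed (simp add: Gc_def)

lemma fc_supp: assumes "fc k0 x \<noteq> 0" shows "x \<noteq> 0" "norm (x::'a::euclidean_space) < 2 powr real_of_int k0"
proof -
  show x: "x \<noteq> 0" using assms by (auto simp: fc_def)
  have k: "kx x \<le> k0" using assms by (auto simp: fc_def Gc_def split: if_splits)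
  have "x \<in> annulus (kx x)" using x by (simp add: annulus_iff)
  then have "norm x < 2 powr real_of_int (kx x)" by (simp add: norm_annulus)
  also have "\<dots> \<le> 2 powr real_of_int k0" using k by simp
  finally show "norm x < 2 powr real_of_int k0" .
qed

lemma fc_bound: assumes k0: "k0 \<le> -1" and x: "(x::'a::euclidean_space) \<noteq> 0"
  shows "\<bar>fc k0 x\<bar> \<le> norm x powr (- real DIM('a))"
proof (cases "kx x \<le> k0")
  case True
  have "x \<in> annulus (kx x)" using x by (simp add: annulus_iff)
  then have nx: "norm x < 2 powr real_of_int (kx x)" by (simp add: norm_annulus)
  have "\<bar>fc k0 x\<bar> = 2 powr (- (real_of_int (kx x) * real DIM('a))) / real_of_int (- kx x)"
    using True x k0 by (simp add: fc_def Gc_def)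
  also have "\<dots> \<le> 2 powr (- (real_of_int (kx x) * real DIM('a)))"
    using True k0 divide_left_mono[of 1 "real_of_int (- kx x)" "2 powr (- (real_of_int (kx x) * real DIM('a)))"] by simp
  also have "\<dots> = (2 powr real_of_int (kx x)) powr (- real DIM('a))"
    by (simp add: powr_powr)
  also have "\<dots> \<le> norm x powr (- real DIM('a))"
    using nx x by (intro powr_mono2') auto
  finally show ?thesis .
next
  case False
  then show ?thesis using x by (simp add: fc_def Gc_def)
qed

lemma kx_meas: "(kx :: 'a::euclidean_space \<Rightarrow> int) \<in> lebesgue \<rightarrow>\<^sub>M count_space (UNIV :: int set)"
proof -
  have pre: "(kx :: 'a \<Rightarrow> int) -` {k} \<in> sets lebesgue" for k
  proof -
    have eq: "(kx :: 'a \<Rightarrow> int) -` {k} = annulus k \<union> (kx -` {k} \<inter> {0::'a})"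
      by (auto simp: annulus_iff)
    have "finite (kx -` {k} \<inter> {0::'a})" by (rule finite_subset[of _ "{0}"]) auto
    then have "kx -` {k} \<inter> {0::'a} \<in> sets lebesgue" by (simp add: finite_imp_closed)
    then have "annulus k \<union> (kx -` {k} \<inter> {0::'a}) \<in> sets lebesgue"
      by (intro sets.Un) auto
    then show ?thesis using eq by simp
  qed
  show ?thesis
    by (subst measurable_count_space_eq2_countable) (use pre in auto)
qed

lemma fc_meas [measurable]: "fc k0 \<in> borel_measurable (lebesgue :: 'a::euclidean_space measure)"
proof -
  have "(\<lambda>x::'a. Gc k0 DIM('a) (kx x)) \<in> borel_measurable lebesgue"
    using measurable_compose[OF kx_meas, of "Gc k0 DIM('a)" borel] by simp
  moreover have "-{0::'a} \<in> sets lebesgue" by simp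
  ultimately show ?thesis unfolding fc_def[abs_def] by measurable
qed

lemma fc_Lp_ann:
  assumes p: "1 \<le> p" and k0: "k0 \<le> -1"
  shows "Lp_norm p (\<lambda>x::'a::euclidean_space. fc k0 x * indicator (annulus k) x) =
    ennreal (Gc k0 DIM('a) k * (2 powr (real_of_int k * DIM('a)) * m0 TYPE('a)) powr inv_exp p)"
proof -
  have m0: "m0 TYPE('a) > 0" by (rule m0_pos)
  have "(\<lambda>x. fc k0 x * indicator (annulus k) x) = (\<lambda>x::'a. Gc k0 DIM('a) k * indicator (annulus k) x)"
    by (simp add: fc_ann)
  moreover have "Lp_norm p (\<lambda>x::'a. Gc k0 DIM('a) k * indicator (annulus k) x) =
    ennreal (\<bar>Gc k0 DIM('a) k\<bar> * (2 powr (real_of_int k * DIM('a)) * m0 TYPE('a)) powr inv_exp p)"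
    by (rule Lp_norm_const_ind[OF annulus_sets(1) emeasure_annulus _ p]) (simp add: m0)
  ultimately show ?thesis using Gc_nonneg[OF k0] by simp
qed

lemma fc_b:
  fixes \<alpha> :: real and n :: nat and m ie :: real
  assumes m: "m > 0"
  shows "2 powr (real_of_int k * \<alpha>) * (Gc k0 n k * (2 powr (real_of_int k * n) * m) powr ie) =
     (if k \<le> k0 then m powr ie * (2 powr (real_of_int k * (\<alpha> - (n - n * ie))) / real_of_int (-k)) else 0)"
proof (cases "k \<le> k0")
  case True
  have "(2 powr (real_of_int k * n) * m) powr ie = 2 powr (real_of_int k * n * ie) * m powr ie"
    using m by (simp add: powr_mult powr_powr)
  moreover have "2 powr (real_of_int k * \<alpha>) * 2 powr (- (real_of_int k * real n)) * 2 powr (real_of_int k * n * ie)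
     = 2 powr (real_of_int k * (\<alpha> - (n - n * ie)))"
    by (simp add: powr_add[symmetric] algebra_simps)
  ultimately show ?thesis using True
    by (simp add: Gc_def)
qed (simp add: Gc_def)

lemma fc_herz:
  fixes \<alpha> :: real and p q :: ennreal
  assumes k0: "k0 \<le> -1" and p: "1 \<le> p" and q: "1 \<le> q"
  and nV: "\<alpha> - (real DIM('a) - real DIM('a) * inv_exp p) > 0 \<or>
           (\<alpha> - (real DIM('a) - real DIM('a) * inv_exp p) = 0 \<and> q \<noteq> 1)"
  shows "herz_norm \<alpha> p q (fc k0 :: 'a::euclidean_space \<Rightarrow> real) < top"
proof -
  define n where "n = DIM('a)"
  define ie where "ie = inv_exp p"
  define \<delta> where "\<delta> = \<alpha> - (real n - real n * ie)"
  have m0: "m0 TYPE('a) > 0" by (rule m0_pos)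
  define d0 where "d0 = m0 TYPE('a) powr ie"
  have d0: "d0 > 0" using m0 by (simp add: d0_def)
  define x where "x j = 2 powr ((real_of_int k0 - real j) * \<delta>) / (real j - real_of_int k0)" for j :: nat
  define b where "b k = 2 powr (real_of_int k * \<alpha>) * (Gc k0 n k * (2 powr (real_of_int k * n) * m0 TYPE('a)) powr ie)" for k
  have bk: "b k = (if k \<le> k0 then d0 * (2 powr (real_of_int k * \<delta>) / real_of_int (-k)) else 0)" for k
    unfolding b_def d0_def \<delta>_def by (rule fc_b[OF m0])
  have bj: "b (k0 - int j) = d0 * x j" for j
    by (simp add: bk x_def)
  have x0: "x j \<ge> 0" for j using k0 by (simp add: x_def)
  have A: "ennreal (2 powr (real_of_int k * \<alpha>)) * Lp_norm p (\<lambda>x::'a. fc k0 x * indicator (annulus k) x) = ennreal (b k)" for k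
    using Gc_nonneg[OF k0] m0
    by (simp add: fc_Lp_ann[OF p k0] b_def n_def ie_def ennreal_mult'[symmetric])
  have b0: "b k \<ge> 0" for k using Gc_nonneg[OF k0] m0 by (simp add: b_def)
  show ?thesis
  proof (cases "q = top")
    case True
    have "herz_norm \<alpha> p q (fc k0 :: 'a \<Rightarrow> real) = (SUP k. ennreal (b k))"
      using True by (simp add: herz_norm_def A)
    also have "\<dots> \<le> ennreal d0"
    proof (rule SUP_least)
      fix k :: int
      show "ennreal (b k) \<le> ennreal d0"
      proof (cases "k \<le> k0")
        case True
        have dnn: "\<delta> \<ge> 0" using nV by (auto simp: \<delta>_def n_def ie_def)
        have "real_of_int k * \<delta> \<le> 0" using True k0 dnn by (intro mult_nonpos_nonneg) auto
        then have "2 powr (real_of_int k * \<delta>) \<le> 1" using powr_mono[of "real_of_int k * \<delta>" 0 2] by simp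
        moreover have "real_of_int (-k) \<ge> 1" using True k0 by simp
        moreover have "2 powr (real_of_int k * \<delta>) / real_of_int (-k) \<le> 2 powr (real_of_int k * \<delta>) / 1"
          using \<open>real_of_int (-k) \<ge> 1\<close> by (intro divide_left_mono) auto
        ultimately have "2 powr (real_of_int k * \<delta>) / real_of_int (-k) \<le> 1"
          by simp
        then have hh: "d0 * (2 powr (real_of_int k * \<delta>) / real_of_int (-k)) \<le> d0 * 1"
          using d0 by (intro mult_left_mono) auto
        show ?thesis using hh True by (intro ennreal_leI) (simp add: bk)
      qed (use d0 in \<open>simp add: bk\<close>)
    qed
    finally show ?thesis using le_less_trans by fastforce
  next
    case False
    define r where "r = enn2real q"
    have r: "1 \<le> r" using p_fin[OF q False] by (auto simp: r_def)
    have integrand: "ennreal (2 powr (real_of_int k * \<alpha> * r)) *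
              enn_powr (Lp_norm p (\<lambda>x::'a. fc k0 x * indicator (annulus k) x)) r = ennreal (b k powr r)" for k
      using Gc_nonneg[OF k0] m0
      by (simp add: fc_Lp_ann[OF p k0] b_def n_def ie_def enn_powr_ennreal ennreal_mult'[symmetric] powr_mult powr_powr)
    have "herz_norm \<alpha> p q (fc k0 :: 'a \<Rightarrow> real) = enn_powr (\<integral>\<^sup>+k. ennreal (b k powr r) \<partial>count_space UNIV) (1 / r)"
      using False by (simp add: herz_norm_def integrand r_def[symmetric])
    also have "(\<integral>\<^sup>+k. ennreal (b k powr r) \<partial>count_space UNIV) = (\<Sum>j. ennreal (b (k0 - int j) powr r))"
      by (rule int_sum_eq) (simp add: bk)
    also have "(\<Sum>j. ennreal (b (k0 - int j) powr r)) \<noteq> top"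
    proof (rule ennreal_suminf_neq_top)
      show "0 \<le> b (k0 - int j) powr r" for j by simp
      have eq: "b (k0 - int j) powr r = d0 powr r * x j powr r" for j
        using d0 x0 by (simp add: bj powr_mult)
      have "summable (\<lambda>j. x j powr r)"
      proof (cases "\<delta> > 0")
        case True
        have "summable (\<lambda>j. (2 powr (-\<delta>)) ^ j)"
          using True by (intro summable_geometric) (simp add: powr_less_one)
        moreover have "norm (x j powr r) \<le> (2 powr (-\<delta>)) ^ j" for j
        proof -
          have jk: "real j - real_of_int k0 \<ge> 1" using k0 by simp
          have "2 powr ((real_of_int k0 - real j) * \<delta>) \<le> 2 powr (- \<delta> * real j)"
          proof (intro powr_mono)
            have "\<delta> * real_of_int k0 \<le> 0" using True k0 by (intro mult_nonneg_nonpos) auto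
            then show "(real_of_int k0 - real j) * \<delta> \<le> - \<delta> * real j" by (simp add: algebra_simps)
          qed simp
          also have "\<dots> = (2 powr (-\<delta>)) ^ j" by (simp add: powr_realpow[symmetric] powr_powr)
          finally have e1: "2 powr ((real_of_int k0 - real j) * \<delta>) \<le> (2 powr (-\<delta>)) ^ j" .
          have "(2 powr (-\<delta>)) ^ j \<le> 1" using True powr_mono[of "-\<delta>" 0 2] by (intro power_le_one) auto
          have xle: "x j \<le> 2 powr ((real_of_int k0 - real j) * \<delta>)"
            unfolding x_def using jk divide_left_mono[of 1 "real j - real_of_int k0" "2 powr ((real_of_int k0 - real j) * \<delta>)"] by simp
          have x1: "x j \<le> 1" using xle e1 \<open>(2 powr (-\<delta>)) ^ j \<le> 1\<close> by linarith
          have "x j powr r \<le> x j powr 1" using r x0 x1 by (intro powr_mono') auto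
          also have "\<dots> = x j" using x0 by simp
          finally show ?thesis using xle e1 by simp
        qed
        ultimately show ?thesis by (rule summable_comparison_test'[where N=0])
      next
        case False
        then have d: "\<delta> = 0" and q1: "q \<noteq> 1" using nV by (auto simp: \<delta>_def n_def ie_def)
        have r1: "r > 1"
        proof -
          have "r \<noteq> 1" using q1 False r_def \<open>q \<noteq> top\<close> p_fin[OF q \<open>q \<noteq> top\<close>] by (metis ennreal_1)
          then show ?thesis using r by simp
        qed
        have "summable (\<lambda>j. real j powr (-r))" using r1 by (simp add: summable_real_powr_iff)
        then have "summable (\<lambda>j. real (Suc j) powr (-r))" by (subst summable_Suc_iff)
        moreover have "norm (x j powr r) \<le> real (Suc j) powr (-r)" for j
        proof -
          have jk: "real j - real_of_int k0 \<ge> real (Suc j)" using k0 by simp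
          have "x j powr r = (real j - real_of_int k0) powr (-r)"
            using jk by (simp add: x_def d powr_divide powr_minus_divide)
          also have "\<dots> \<le> real (Suc j) powr (-r)" using jk r by (intro powr_mono2') auto
          finally show ?thesis by simp
        qed
        ultimately show ?thesis by (rule summable_comparison_test'[where N=0])
      qed
      then show "summable (\<lambda>j. b (k0 - int j) powr r)" unfolding eq by (rule summable_mult)
    qed
    ultimately show ?thesis by (simp add: enn_powr_less_top top.not_eq_extremum)
  qed
qed

lemma nec:
  fixes \<Omega> :: "'a::euclidean_space set" and \<alpha> :: real and p q :: ennreal
  assumes \<Omega>: "open \<Omega>" "0 \<in> \<Omega>" and p: "1 \<le> p" and q: "1 \<le> q"
  and nV: "\<alpha> - (real DIM('a) - real DIM('a) * inv_exp p) > 0 \<or>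
           (\<alpha> - (real DIM('a) - real DIM('a) * inv_exp p) = 0 \<and> q \<noteq> 1)"
  shows "\<not> herz_space \<Omega> \<alpha> p q \<subseteq> L1_loc \<Omega>"
proof
  assume sub: "herz_space \<Omega> \<alpha> p q \<subseteq> L1_loc \<Omega>"
  obtain r where r: "r > 0" "cball 0 r \<subseteq> \<Omega>" using \<Omega> open_contains_cball by blast
  obtain N :: nat where N: "1 / r < 2 ^ N" using real_arch_pow[of 2 "1/r"] by auto
  define k0 :: int where "k0 = - int N - 1"
  have k0: "k0 \<le> -1" by (simp add: k0_def)
  have k0r: "2 powr real_of_int k0 \<le> r"
  proof -
    have e: "real_of_int k0 = - real (Suc N)" by (simp add: k0_def)
    have "2 powr real_of_int k0 = 1 / 2 ^ (Suc N)"
      unfolding e powr_minus_divide by (subst powr_realpow) auto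
    also have "\<dots> \<le> 1 / 2 ^ N" by (simp add: divide_simps)
    also have "\<dots> < r" using N r by (simp add: field_simps)
    finally show ?thesis by simp
  qed
  define f where "f = (fc k0 :: 'a \<Rightarrow> real)"
  have m0: "m0 TYPE('a) > 0" by (rule m0_pos)
  have supp: "x \<in> cball 0 r" if "f x \<noteq> 0" for x
    using fc_supp[of k0 x] that k0r by (simp add: f_def)
  have f\<Omega>: "(\<lambda>x. indicator \<Omega> x * f x) = f"
  proof
    fix x show "indicator \<Omega> x * f x = f x"
      using supp[of x] r(2) by (cases "f x = 0") (auto simp: indicator_def)
  qed
  have f\<Omega>': "indicator \<Omega> x * f x = f x" for x using f\<Omega> by (metis fun_cong)
  have f_meas[measurable]: "f \<in> borel_measurable lebesgue" by (simp add: f_def)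
  have "f \<in> herz_space \<Omega> \<alpha> p q"
    unfolding herz_space_def mem_Collect_eq f\<Omega> Lp_loc_punct_def f\<Omega>'
  proof (intro conjI allI impI f_meas)
    show "herz_norm \<alpha> p q f < top" unfolding f_def by (rule fc_herz[OF k0 p q nV])
  next
    fix K :: "'a set" assume K: "compact K \<and> K \<subseteq> - {0}"
    have Kc: "closed K" using K by (simp add: compact_imp_closed)
    obtain d where d: "d > 0" "\<forall>x\<in>K. d \<le> dist 0 x"
      using separate_point_closed[OF Kc, of 0] K by auto
    have Ks[measurable]: "K \<in> sets lebesgue" using Kc by simp
    have Kf: "emeasure lebesgue K < top"
      using emeasure_compact_finite[of K] K by (simp add: compact_imp_closed)
    show "Lp_norm p (\<lambda>x. f x * indicator K x) < top"
    proof (rule Lp_norm_bounded[OF _ Ks Kf _ p])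
      show "(\<lambda>x. f x * indicator K x) \<in> borel_measurable lebesgue" by measurable
      show "d powr (- real DIM('a)) \<ge> 0" by simp
      fix x
      show "\<bar>f x * indicator K x\<bar> \<le> d powr (- real DIM('a)) * indicator K x"
      proof (cases "x \<in> K")
        case True
        then have x0: "x \<noteq> 0" and dx: "d \<le> norm x" using K d by auto
        have "\<bar>f x\<bar> \<le> norm x powr (- real DIM('a))" unfolding f_def by (rule fc_bound[OF k0 x0])
        also have "\<dots> \<le> d powr (- real DIM('a))" using dx d by (intro powr_mono2') auto
        finally show ?thesis using True by simp
      qed simp
    qed
  qed
  then have "f \<in> L1_loc \<Omega>" using sub by auto
  then have "set_integrable lebesgue (cball 0 r) f" using r by (auto simp: L1_loc_def)
  then have fin: "(\<integral>\<^sup>+x. ennreal (norm (indicator (cball 0 r) x *\<^sub>R f x)) \<partial>lebesgue) < top"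
    by (simp add: set_integrable_def integrable_iff_bounded)
  have "(\<integral>\<^sup>+x. ennreal (norm (indicator (cball 0 r) x *\<^sub>R f x)) \<partial>lebesgue) = (\<integral>\<^sup>+x. ennreal \<bar>f x\<bar> \<partial>lebesgue)"
  proof (intro nn_integral_cong)
    fix x show "ennreal (norm (indicator (cball 0 r) x *\<^sub>R f x)) = ennreal \<bar>f x\<bar>"
      using supp[of x] by (cases "f x = 0") (auto simp: indicator_def)
  qed
  also have "\<dots> \<ge> (\<integral>\<^sup>+x. (\<Sum>j. ennreal (\<bar>f x\<bar> * indicator (annulus (k0 - int j)) x)) \<partial>lebesgue)"
    by (intro nn_integral_mono) (simp add: ann_sum)
  also have "(\<integral>\<^sup>+x. (\<Sum>j. ennreal (\<bar>f x\<bar> * indicator (annulus (k0 - int j)) x)) \<partial>lebesgue)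
      = (\<Sum>j. \<integral>\<^sup>+x. ennreal (\<bar>f x\<bar> * indicator (annulus (k0 - int j)) x) \<partial>lebesgue)"
    by (rule nn_integral_suminf) measurable
  also have "\<dots> = (\<Sum>j. ennreal (m0 TYPE('a) * inverse (real (j + Suc N))))"
  proof (intro suminf_cong)
    fix j :: nat
    define k where "k = k0 - int j"
    have kk: "k \<le> k0" by (simp add: k_def)
    have "(\<integral>\<^sup>+x. ennreal (\<bar>f x\<bar> * indicator (annulus k) x) \<partial>lebesgue)
        = (\<integral>\<^sup>+x. ennreal (Gc k0 DIM('a) k) * indicator (annulus k :: 'a set) x \<partial>lebesgue)"
    proof (intro nn_integral_cong)
      fix x
      have "\<bar>f x\<bar> * indicator (annulus k) x = \<bar>f x * indicator (annulus k) x\<bar>" by (simp add: abs_mult)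
      also have "\<dots> = Gc k0 DIM('a) k * indicator (annulus k) x"
        using Gc_nonneg[OF k0] by (simp add: f_def fc_ann abs_mult)
      finally show "ennreal (\<bar>f x\<bar> * indicator (annulus k) x) = ennreal (Gc k0 DIM('a) k) * indicator (annulus k) x"
        by (simp add: indicator_def)
    qed
    also have "\<dots> = ennreal (Gc k0 DIM('a) k) * emeasure lebesgue (annulus k :: 'a set)"
      by (simp add: nn_integral_cmult_indicator)
    also have "\<dots> = ennreal (Gc k0 DIM('a) k * (2 powr (real_of_int k * DIM('a)) * m0 TYPE('a)))"
      using Gc_nonneg[OF k0] m0 by (simp add: emeasure_annulus ennreal_mult)
    also have "Gc k0 DIM('a) k * (2 powr (real_of_int k * DIM('a)) * m0 TYPE('a)) = m0 TYPE('a) * inverse (real (j + Suc N))"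
    proof -
      have "real_of_int (- k) = real (j + Suc N)" by (simp add: k_def k0_def)
      moreover have "2 powr (- (real_of_int k * real DIM('a))) * 2 powr (real_of_int k * DIM('a)) = 1"
        by (simp add: powr_add[symmetric])
      ultimately show ?thesis using kk
        by (simp add: Gc_def field_simps del: of_int_minus)
    qed
    finally show "(\<integral>\<^sup>+x. ennreal (\<bar>f x\<bar> * indicator (annulus (k0 - int j)) x) \<partial>lebesgue) = ennreal (m0 TYPE('a) * inverse (real (j + Suc N)))"
      by (simp add: k_def)
  qed
  also have "\<dots> = top"
  proof (rule summable_iff_suminf_neq_top)
    show "0 \<le> m0 TYPE('a) * inverse (real (j + Suc N))" for j using m0 by simp
    show "\<not> summable (\<lambda>j. m0 TYPE('a) * inverse (real (j + Suc N)))"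
    proof
      assume "summable (\<lambda>j. m0 TYPE('a) * inverse (real (j + Suc N)))"
      then have "summable (\<lambda>j. inverse (real (j + Suc N)))" using m0 by (simp add: summable_cmult_iff)
      then have "summable (\<lambda>j. inverse (real j))"
        using summable_iff_shift[of "\<lambda>j. inverse (real j)" "Suc N"] by simp
      then show False using not_summable_harmonic by blast
    qed
  qed
  finally show False using fin by simp
qed

theorem lemma2p4:
  fixes \<Omega> :: "'a::euclidean_space set" and \<alpha> :: real and p q :: ennreal
  assumes "open \<Omega>" and "0 \<in> \<Omega>" and "1 \<le> p" and "1 \<le> q"
  shows "herz_space \<Omega> \<alpha> p q \<subseteq> L1_loc \<Omega> \<longleftrightarrow> (\<alpha>, p, q) \<in> V_set DIM('a)"
proof -
  define \<delta> where "\<delta> = \<alpha> - (real DIM('a) - real DIM('a) * inv_exp p)"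
  have V_iff: "(\<alpha>, p, q) \<in> V_set DIM('a) \<longleftrightarrow> \<delta> < 0 \<or> (\<delta> = 0 \<and> q = 1)"
  proof -
    have "\<alpha> = 0 \<and> p = top \<and> q = top \<Longrightarrow> \<delta> < 0"
      using DIM_positive[where 'a='a] by (simp add: \<delta>_def inv_exp_def)
    then show ?thesis using assms(3,4) unfolding V_set_def \<delta>_def by auto
  qed
  show ?thesis
  proof
    assume sub: "herz_space \<Omega> \<alpha> p q \<subseteq> L1_loc \<Omega>"
    show "(\<alpha>, p, q) \<in> V_set DIM('a)"
    proof (rule ccontr)
      assume "(\<alpha>, p, q) \<notin> V_set DIM('a)"
      then have "\<delta> > 0 \<or> (\<delta> = 0 \<and> q \<noteq> 1)" using V_iff by auto
      then have "\<not> herz_space \<Omega> \<alpha> p q \<subseteq> L1_loc \<Omega>"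
        using nec[OF assms] unfolding \<delta>_def by blast
      then show False using sub by simp
    qed
  next
    assume "(\<alpha>, p, q) \<in> V_set DIM('a)"
    then have V: "\<delta> < 0 \<or> (\<delta> = 0 \<and> q = 1)" using V_iff by simp
    show "herz_space \<Omega> \<alpha> p q \<subseteq> L1_loc \<Omega>"
    proof
      fix f assume f: "f \<in> herz_space \<Omega> \<alpha> p q"
      show "f \<in> L1_loc \<Omega>" unfolding L1_loc_def
        using suff[OF assms(3,4) V[unfolded \<delta>_def] f] by blast
    qed
  qed
qed

end
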